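(* Let $\alpha,\beta,\gamma\in\mathbb{Z}[i]$ satisfy $\alpha^2+i\beta^2+(1+i)\gamma^2=0$, $\alpha\beta\gamma\neq0$, $\gcd(\alpha,\beta,\gamma)\in U$, and suppose $\alpha=i^m\alpha'$, $\beta=i^n\beta'$, $\gamma=i^l\gamma'$ with $m,n,l\in\{0,1\}$ and $\alpha',\beta',\gamma'\in O^I$. Then $m+l\equiv n+l\equiv1\pmod 2$.
   Context: $\mathbb{Z}[i]$ is the ring of Gaussian integers, $U=\{1,-1,i,-i\}$ its unit group; $R(\alpha),I(\alpha)$ are real and imaginary parts. $O=\{\alpha: R(\alpha)+I(\alpha)\equiv1\pmod 2\}$, $O^I=\{\alpha\in O: R(\alpha)\equiv 1\pmod 4\}$. *)

theory Defs
  imports Complex_Main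
begin

definition gauss_int :: "complex \<Rightarrow> bool" where
  "gauss_int z \<longleftrightarrow> Re z \<in> \<int> \<and> Im z \<in> \<int>"

definition gdvd :: "complex \<Rightarrow> complex \<Rightarrow> bool" where
  "gdvd d z \<longleftrightarrow> (\<exists>k. gauss_int k \<and> z = d * k)"

definition gunits :: "complex set" where
  "gunits = {1, -1, \<i>, -\<i>}"

text \<open>gcd(a,b,c) is in U: every common Gaussian-integer divisor is a unit
(the gcd is only defined up to units).\<close>
definition gcd3_unit :: "complex \<Rightarrow> complex \<Rightarrow> complex \<Rightarrow> bool" where
  "gcd3_unit a b c \<longleftrightarrow>
     (\<forall>d. gauss_int d \<and> gdvd d a \<and> gdvd d b \<and> gdvd d c \<longrightarrow> d \<in> gunits)"

definition gO :: "complex set" where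
  "gO = {z. gauss_int z \<and> odd (\<lfloor>Re z\<rfloor> + \<lfloor>Im z\<rfloor>)}"

definition gOI :: "complex set" where
  "gOI = {z. z \<in> gO \<and> \<lfloor>Re z\<rfloor> mod 4 = 1}"

end

theory Submission
  imports Defs
begin

lemma gOI_repr:
  assumes "x \<in> gOI"
  obtains a b :: int where "x = of_int a + \<i> * of_int b" "a mod 4 = 1" "even b"
proof -
  have g: "Re x \<in> \<int>" "Im x \<in> \<int>" and o: "odd (\<lfloor>Re x\<rfloor> + \<lfloor>Im x\<rfloor>)"
    and m: "\<lfloor>Re x\<rfloor> mod 4 = 1"
    using assms by (auto simp: gOI_def gO_def gauss_int_def)
  have e: "even \<lfloor>Im x\<rfloor>" using o m by presburger
  have "x = of_int \<lfloor>Re x\<rfloor> + \<i> * of_int \<lfloor>Im x\<rfloor>"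
    using g by (simp add: complex_eq_iff)
  then show ?thesis using that m e by blast
qed

lemma sq_mod:
  fixes a b :: int assumes "a mod 4 = 1" "even b"
  shows "\<exists>k. a*a - b*b = 4*k+1" "\<exists>k. 2*a*b = 4*k"
proof -
  obtain s where s: "a = 4*s+1" using assms(1) by (metis mod_div_mult_eq mult.commute add.commute)
  obtain t where t: "b = 2*t" using assms(2) by blast
  show "\<exists>k. a*a - b*b = 4*k+1"
    by (rule exI[of _ "4*s*s + 2*s - t*t"]) (simp add: s t algebra_simps)
  show "\<exists>k. 2*a*b = 4*k"
    by (rule exI[of _ "a*t"]) (simp add: t algebra_simps)
qed

theorem lemma4p17:
  fixes \<alpha> \<beta> \<gamma> \<alpha>' \<beta>' \<gamma>' :: complex and m n l :: nat
  assumes "gauss_int \<alpha>" and "gauss_int \<beta>" and "gauss_int \<gamma>"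
    and "\<alpha>^2 + \<i> * \<beta>^2 + (1 + \<i>) * \<gamma>^2 = 0"
    and "\<alpha> * \<beta> * \<gamma> \<noteq> 0"
    and "gcd3_unit \<alpha> \<beta> \<gamma>"
    and "m \<in> {0,1}" and "n \<in> {0,1}" and "l \<in> {0,1}"
    and "\<alpha>' \<in> gOI" and "\<beta>' \<in> gOI" and "\<gamma>' \<in> gOI"
    and "\<alpha> = \<i>^m * \<alpha>'" and "\<beta> = \<i>^n * \<beta>'" and "\<gamma> = \<i>^l * \<gamma>'"
  shows "odd (m + l) \<and> odd (n + l)"
proof -
  obtain a1 b1 where A: "\<alpha>' = of_int a1 + \<i> * of_int b1" "a1 mod 4 = 1" "even b1"
    using gOI_repr[OF assms(10)] by blast
  obtain a2 b2 where B: "\<beta>' = of_int a2 + \<i> * of_int b2" "a2 mod 4 = 1" "even b2"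
    using gOI_repr[OF assms(11)] by blast
  obtain a3 b3 where C: "\<gamma>' = of_int a3 + \<i> * of_int b3" "a3 mod 4 = 1" "even b3"
    using gOI_repr[OF assms(12)] by blast
  obtain k1 where k1: "a1*a1 - b1*b1 = 4*k1+1" using sq_mod[OF A(2,3)] by blast
  obtain j1 where j1: "2*a1*b1 = 4*j1" using sq_mod[OF A(2,3)] by blast
  obtain k2 where k2: "a2*a2 - b2*b2 = 4*k2+1" using sq_mod[OF B(2,3)] by blast
  obtain j2 where j2: "2*a2*b2 = 4*j2" using sq_mod[OF B(2,3)] by blast
  obtain k3 where k3: "a3*a3 - b3*b3 = 4*k3+1" using sq_mod[OF C(2,3)] by blast
  obtain j3 where j3: "2*a3*b3 = 4*j3" using sq_mod[OF C(2,3)] by blast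
  define sm :: int where "sm = (if m = 0 then 1 else -1)"
  define sn :: int where "sn = (if n = 0 then 1 else -1)"
  define sl :: int where "sl = (if l = 0 then 1 else -1)"
  have sq: "\<alpha>^2 = of_int sm * \<alpha>'^2" "\<beta>^2 = of_int sn * \<beta>'^2" "\<gamma>^2 = of_int sl * \<gamma>'^2"
    using assms(7,8,9,13,14,15) by (auto simp: sm_def sn_def sl_def power2_eq_square)
  have E: "of_int sm * \<alpha>'^2 + \<i> * (of_int sn * \<beta>'^2) + (1 + \<i>) * (of_int sl * \<gamma>'^2) = 0"
    using assms(4) sq by simp
  have re: "sm * (a1*a1 - b1*b1) - sn * (2*a2*b2) + sl * ((a3*a3 - b3*b3) - 2*a3*b3) = 0"
  proof -
    have "Re (of_int sm * \<alpha>'^2 + \<i> * (of_int sn * \<beta>'^2) + (1 + \<i>) * (of_int sl * \<gamma>'^2)) = 0"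
      using E by simp
    then have "real_of_int (sm * (a1*a1 - b1*b1) - sn * (2*a2*b2) + sl * ((a3*a3 - b3*b3) - 2*a3*b3)) = 0"
      by (simp add: A(1) B(1) C(1) power2_eq_square algebra_simps)
    then show ?thesis by linarith
  qed
  have im: "sm * (2*a1*b1) + sn * (a2*a2 - b2*b2) + sl * ((a3*a3 - b3*b3) + 2*a3*b3) = 0"
  proof -
    have "Im (of_int sm * \<alpha>'^2 + \<i> * (of_int sn * \<beta>'^2) + (1 + \<i>) * (of_int sl * \<gamma>'^2)) = 0"
      using E by simp
    then have "real_of_int (sm * (2*a1*b1) + sn * (a2*a2 - b2*b2) + sl * ((a3*a3 - b3*b3) + 2*a3*b3)) = 0"
      by (simp add: A(1) B(1) C(1) power2_eq_square algebra_simps)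
    then show ?thesis by linarith
  qed
  show ?thesis
    using re im k1 j1 k2 j2 k3 j3 assms(7,8,9) unfolding sm_def sn_def sl_def
    by (auto split: if_splits) presburger+
qed

end
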